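(* Consider a node $u$ in the distributed quantum routing model, a subset $X\subseteq\{1,\dots,\deg(u)\}$ of its ports, and a function $f:X\to\{0,1\}$ such that $u$ can evaluate $f(x)$ in $O(1)$ rounds by sending $O(1)$ messages, for any given $x\in X$, and such that $f$ does not change during the execution. Let $C_u=|f^{-1}(1)|$. Then there is a distributed quantum algorithm $\mathsf{IteratedQuantumSearch}$, invoked by $u$, that returns all elements $x\in X$ with $f(x)=1$ with high probability, and whose round complexity and quantum message complexity are $O\left(\sqrt{|X|\max\{C_u,1\}}\cdot\log n\right)$.
   Context: Network of $n$ nodes in the synchronous port numbering model with quantum routing: adjacent nodes share a classical link and a quantum channel; a node accesses neighbors through ports $1,\dots,\deg(u)$. Quantum message complexity counts, per round, the maximum number of quantum messages over all computational-basis configurations of the global state, summed over rounds. It is known (and may be used) that there is a procedure $\mathsf{QuantumSearch}(f,X)$ invoked by $u$ which, with high probability, returns some element of $f^{-1}(1)$ if $C_u>0$ and returns NULL otherwise, with quantum message complexity and time complexity $O\left(\sqrt{|X|/\max\{1,C_u\}}\cdot\log n\right)$, as long as $f$ does not change during the invocation; its failure probability can be made at most $1/n^{c'}$ for any constant $c'$. "With high probability" means with probability at least $1-1/n^c$ for a constant $c>0$. *)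

theory Defs
  imports "HOL-Probability.Probability"
begin

text \<open>Abstract model of node u's computation. u may (i) evaluate f at a port x
(O(1) rounds/messages), (ii) invoke QuantumSearch with accuracy constant c' on the
function f_S (x \<mapsto> f x \<and> x \<notin> S, locally evaluable since u knows S) over X,
(iii) stop with an output. An algorithm is an adaptive strategy on the history of
responses; it is chosen uniformly (it knows n and X but not f).\<close>

datatype action = Eval nat | Search nat "nat set" | Output "nat set"
datatype resp = REval bool | RSearch "nat option"

definition add_cost :: "real \<times> real \<Rightarrow> nat set option \<times> real \<times> real \<Rightarrow> nat set option \<times> real \<times> real" where
  "add_cost c t = (fst t, fst (snd t) + fst c, snd (snd t) + snd c)"

text \<open>Execution with a fuel bound; running out of fuel counts as failure (output None).
The result is a distribution over (output, total rounds, total quantum messages).\<close>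
fun exec :: "(resp list \<Rightarrow> action) \<Rightarrow> (nat \<Rightarrow> bool) \<Rightarrow> (nat \<Rightarrow> nat set \<Rightarrow> nat option pmf)
   \<Rightarrow> (nat \<Rightarrow> real \<times> real) \<Rightarrow> (nat \<Rightarrow> nat set \<Rightarrow> real \<times> real) \<Rightarrow> nat \<Rightarrow> resp list
   \<Rightarrow> (nat set option \<times> real \<times> real) pmf" where
  "exec alg f QS ecost scost 0 h = return_pmf (None, 0, 0)"
| "exec alg f QS ecost scost (Suc k) h =
     (case alg h of
        Output A \<Rightarrow> return_pmf (Some A, 0, 0)
      | Eval x \<Rightarrow> map_pmf (add_cost (ecost x)) (exec alg f QS ecost scost k (h @ [REval (f x)]))
      | Search c S \<Rightarrow> bind_pmf (QS c S)
           (\<lambda>r. map_pmf (add_cost (scost c S)) (exec alg f QS ecost scost k (h @ [RSearch r]))))"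

definition search_correct :: "nat set \<Rightarrow> (nat \<Rightarrow> bool) \<Rightarrow> nat set \<Rightarrow> nat option \<Rightarrow> bool" where
  "search_correct X f S r =
     (if (\<exists>x\<in>X. f x \<and> x \<notin> S) then (\<exists>x. r = Some x \<and> x \<in> X \<and> f x \<and> x \<notin> S) else r = None)"

definition search_oracle :: "nat \<Rightarrow> nat set \<Rightarrow> (nat \<Rightarrow> bool) \<Rightarrow> (nat \<Rightarrow> nat set \<Rightarrow> nat option pmf)
     \<Rightarrow> (nat \<Rightarrow> real) \<Rightarrow> (nat \<Rightarrow> nat set \<Rightarrow> real \<times> real) \<Rightarrow> bool" where
  "search_oracle n X f QS Kq scost =
    (\<forall>c S. measure_pmf.prob (QS c S) {r. search_correct X f S r} \<ge> 1 - 1 / real n ^ c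
      \<and> fst (scost c S) \<le> Kq c * sqrt (real (card X) / max 1 (real (card {x\<in>X. f x \<and> x \<notin> S}))) * ln (real n)
      \<and> snd (scost c S) \<le> Kq c * sqrt (real (card X) / max 1 (real (card {x\<in>X. f x \<and> x \<notin> S}))) * ln (real n))"

definition eval_costs :: "real \<Rightarrow> (nat \<Rightarrow> real \<times> real) \<Rightarrow> bool" where
  "eval_costs Ke ecost = (\<forall>x. fst (ecost x) \<le> Ke \<and> snd (ecost x) \<le> Ke)"

end

theory Submission
  imports Defs
begin

lemma prob_bind_le:
  fixes M :: "'a pmf" and N :: "'a \<Rightarrow> 'b pmf"
  assumes h: "\<And>r. r \<in> set_pmf M \<Longrightarrow> measure_pmf.prob (N r) B \<le> (if P r then a else 1)"
    and a: "a \<ge> 0" and q: "measure_pmf.prob M {r. \<not> P r} \<le> q"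
  shows "measure_pmf.prob (bind_pmf M N) B \<le> a + q"
proof -
  have q0: "q \<ge> 0" using q measure_nonneg order_trans by blast
  have "emeasure (measure_pmf (bind_pmf M N)) B = (\<integral>\<^sup>+x. emeasure (N x) B \<partial>M)" by simp
  also have "\<dots> \<le> (\<integral>\<^sup>+x. (ennreal a + indicator {r. \<not> P r} x) \<partial>M)"
  proof (rule nn_integral_mono_AE, rule AE_pmfI)
    fix r assume r: "r \<in> set_pmf M"
    have "emeasure (N r) B = ennreal (measure_pmf.prob (N r) B)"
      by (simp add: measure_pmf.emeasure_eq_measure)
    also have "\<dots> \<le> ennreal (if P r then a else 1)" using h[OF r] by (simp add: ennreal_leI)
    also have "\<dots> \<le> ennreal a + indicator {r. \<not> P r} r" by (auto simp: indicator_def)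
    finally show "emeasure (N r) B \<le> ennreal a + indicator {r. \<not> P r} r" .
  qed
  also have "\<dots> = ennreal a + emeasure M {r. \<not> P r}"
    by (subst nn_integral_add) auto
  also have "\<dots> = ennreal a + ennreal (measure_pmf.prob M {r. \<not> P r})"
    by (simp add: measure_pmf.emeasure_eq_measure)
  also have "\<dots> \<le> ennreal (a + q)" using a q q0
    by (simp add: ennreal_plus[symmetric] del: ennreal_plus)
  finally have "ennreal (measure_pmf.prob (bind_pmf M N) B) \<le> ennreal (a + q)"
    by (simp add: measure_pmf.emeasure_eq_measure)
  thus ?thesis using a q0 by (metis ennreal_le_iff add_nonneg_nonneg)
qed

lemma sqrt_step:
  fixes m :: real assumes "m \<ge> 1"
  shows "1 / sqrt m + 2 * sqrt (m - 1) \<le> 2 * sqrt m"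
proof -
  define s where "s = sqrt m"
  have s1: "s \<ge> 1" using assms by (simp add: s_def)
  have ms: "m = s * s" using assms by (simp add: s_def)
  have a: "1 / (2 * s) \<le> 1 / 2" using s1 by (simp add: divide_le_eq)
  have "sqrt (m - 1) \<le> s - 1 / (2 * s)"
  proof (rule real_le_lsqrt)
    show "0 \<le> s - 1 / (2 * s)" using a s1 by linarith
    have "(s - 1 / (2 * s))^2 = s * s - 1 + 1 / (4 * (s * s))"
      using s1 by (simp add: power2_eq_square algebra_simps divide_simps)
    moreover have "1 / (4 * (s * s)) \<ge> 0" by simp
    ultimately show "m - 1 \<le> (s - 1 / (2 * s))^2" unfolding ms by linarith
  qed
  moreover have "1 / s = 2 * (1 / (2 * s))" using s1 by simp
  ultimately show ?thesis unfolding s_def by linarith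
qed

datatype st = Srch "nat set" | Chk "nat set" nat | Done "nat set"

fun upd :: "nat set \<Rightarrow> st \<Rightarrow> resp \<Rightarrow> st" where
  "upd X (Srch S) (RSearch None) = Done S"
| "upd X (Srch S) (RSearch (Some x)) = (if x \<in> X \<and> x \<notin> S then Chk S x else Done S)"
| "upd X (Chk S x) (REval b) = (if b then Srch (insert x S) else Done S)"
| "upd X s r = Done {}"

fun act :: "nat \<Rightarrow> st \<Rightarrow> action" where
  "act c0 (Srch S) = Search c0 S"
| "act c0 (Chk S x) = Eval x"
| "act c0 (Done S) = Output S"

definition init :: "nat set \<Rightarrow> st" where
  "init X = (if X = {} then Done {} else Srch {})"

definition alg0 :: "nat \<Rightarrow> nat set \<Rightarrow> resp list \<Rightarrow> action" where
  "alg0 c0 X h = act c0 (foldl (upd X) (init X) h)"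

lemma exec_Done:
  "foldl (upd X) (init X) h = Done S \<Longrightarrow>
   exec (alg0 c0 X) f QS ec sc k h = return_pmf (if k = 0 then None else Some S, 0, 0)"
  by (cases k) (simp_all add: alg0_def)

lemma exec_Srch:
  "foldl (upd X) (init X) h = Srch S \<Longrightarrow>
   exec (alg0 c0 X) f QS ec sc (Suc k) h =
     bind_pmf (QS c0 S) (\<lambda>r. map_pmf (add_cost (sc c0 S)) (exec (alg0 c0 X) f QS ec sc k (h @ [RSearch r])))"
  by (simp add: alg0_def)

lemma exec_Chk:
  "foldl (upd X) (init X) h = Chk S x \<Longrightarrow>
   exec (alg0 c0 X) f QS ec sc (Suc k) h =
     map_pmf (add_cost (ec x)) (exec (alg0 c0 X) f QS ec sc k (h @ [REval (f x)]))"
  by (simp add: alg0_def)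

definition ff :: "real \<Rightarrow> real \<Rightarrow> nat \<Rightarrow> real" where
  "ff Q E m = Q * (1 + 2 * sqrt (real m)) + E * (real m + 1)"

lemma ff_step:
  assumes "Q \<ge> 0" "E \<ge> 0"
  shows "Q / sqrt (max 1 (real m)) + (if m = 0 then E else E + ff Q E (m - 1)) \<le> ff Q E m"
proof (cases "m = 0")
  case True thus ?thesis by (simp add: ff_def)
next
  case False
  hence m1: "real m \<ge> 1" by simp
  have "Q * (1 / sqrt (real m) + 2 * sqrt (real m - 1)) \<le> Q * (2 * sqrt (real m))"
    using sqrt_step[OF m1] assms(1) by (rule mult_left_mono)
  moreover have "real (m - 1) = real m - 1" using False by simp
  ultimately show ?thesis using False m1 unfolding ff_def
    by (simp add: max_def algebra_simps)
qed

lemma add_cost_simps[simp]: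
  "fst (add_cost c t) = fst t"
  "fst (snd (add_cost c t)) = fst (snd t) + fst c"
  "snd (snd (add_cost c t)) = snd (snd t) + snd c"
  by (simp_all add: add_cost_def)

lemma prob_map_add_cost[simp]:
  "measure_pmf.prob (map_pmf (add_cost c) M) {t. fst t \<noteq> Some T} = measure_pmf.prob M {t. fst t \<noteq> Some T}"
proof -
  have "add_cost c -` {t. fst t \<noteq> Some T} = {t. fst t \<noteq> Some T}" by auto
  thus ?thesis by simp
qed


lemma main:
  assumes orc: "search_oracle n X f QS Kq scost" and ev: "eval_costs Ke ecost"
    and n2: "2 \<le> n" and fin: "finite X"
  shows "foldl (upd X) (init X) h = Srch S \<Longrightarrow> S \<subseteq> {x\<in>X. f x} \<Longrightarrow>
     card ({x\<in>X. f x} - S) = m \<Longrightarrow> 2 * m + 2 \<le> k \<Longrightarrow>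
     measure_pmf.prob (exec (alg0 c0 X) f QS ecost scost k h) {t. fst t \<noteq> Some {x\<in>X. f x}}
        \<le> (real m + 1) / real n ^ c0
   \<and> (\<forall>t\<in>set_pmf (exec (alg0 c0 X) f QS ecost scost k h).
        fst (snd t) \<le> ff (max 0 (Kq c0) * sqrt (real (card X)) * ln (real n)) (max 0 Ke) m
      \<and> snd (snd t) \<le> ff (max 0 (Kq c0) * sqrt (real (card X)) * ln (real n)) (max 0 Ke) m)"
proof (induction m arbitrary: S h k rule: less_induct)
  case (less m S h k)
  define T where "T = {x\<in>X. f x}"
  define p where "p = 1 / real n ^ c0"
  define Q where "Q = max 0 (Kq c0) * sqrt (real (card X)) * ln (real n)"
  define E where "E = max 0 Ke"
  define R where "R = (if m = 0 then E else E + ff Q E (m - 1))"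
  define ex where "ex = exec (alg0 c0 X) f QS ecost scost"
  have finT: "finite T" using fin by (simp add: T_def)
  have hS: "foldl (upd X) (init X) h = Srch S" and ST: "S \<subseteq> T" and cm: "card (T - S) = m"
    and km: "2 * m + 2 \<le> k" using less.prems by (auto simp: T_def)
  have IH: "\<And>m' S' h' k'. m' < m \<Longrightarrow> foldl (upd X) (init X) h' = Srch S' \<Longrightarrow> S' \<subseteq> T \<Longrightarrow>
     card (T - S') = m' \<Longrightarrow> 2 * m' + 2 \<le> k' \<Longrightarrow>
     measure_pmf.prob (ex k' h') {t. fst t \<noteq> Some T} \<le> (real m' + 1) * p
   \<and> (\<forall>t\<in>set_pmf (ex k' h'). fst (snd t) \<le> ff Q E m' \<and> snd (snd t) \<le> ff Q E m')"
    using less.IH unfolding T_def p_def Q_def E_def ex_def by simp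
  have Q0: "Q \<ge> 0" unfolding Q_def using n2 by (intro mult_nonneg_nonneg) auto
  have E0: "E \<ge> 0" by (simp add: E_def)
  have p0: "p \<ge> 0" by (simp add: p_def)
  obtain k1 where k: "k = Suc k1" and k1: "k1 \<ge> 1" using km by (cases k) auto
  have exk: "ex k h = bind_pmf (QS c0 S) (\<lambda>r. map_pmf (add_cost (scost c0 S)) (ex k1 (h @ [RSearch r])))"
    unfolding ex_def k by (rule exec_Srch[OF hS])
  have setTS: "{x\<in>X. f x \<and> x \<notin> S} = T - S" by (auto simp: T_def)
  have per: "measure_pmf.prob (ex k1 (h @ [RSearch r])) {t. fst t \<noteq> Some T}
                \<le> (if search_correct X f S r then real m * p else 1)
          \<and> (\<forall>t\<in>set_pmf (ex k1 (h @ [RSearch r])). fst (snd t) \<le> R \<and> snd (snd t) \<le> R)" for r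
  proof -
    have R0: "R \<ge> 0" unfolding R_def ff_def using Q0 E0 by auto
    have ER: "E \<le> R" unfolding R_def ff_def using Q0 E0 by auto
    show ?thesis
    proof (cases "\<exists>x. r = Some x \<and> x \<in> X \<and> x \<notin> S")
      case False
      hence hD: "foldl (upd X) (init X) (h @ [RSearch r]) = Done S" using hS
        by (cases r) auto
      have G: "ex k1 (h @ [RSearch r]) = return_pmf (Some S, 0, 0)"
        unfolding ex_def using exec_Done[OF hD] k1 by simp
      have "search_correct X f S r \<Longrightarrow> S = T"
      proof -
        assume c: "search_correct X f S r"
        have "\<not> (\<exists>x\<in>X. f x \<and> x \<notin> S)" using c False unfolding search_correct_def
          by (auto split: if_splits)
        thus "S = T" using ST by (auto simp: T_def)
      qed
      thus ?thesis using G R0 p0 by (auto simp: indicator_def)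
    next
      case True
      then obtain x where r: "r = Some x" and xX: "x \<in> X" and xS: "x \<notin> S" by blast
      have hC: "foldl (upd X) (init X) (h @ [RSearch r]) = Chk S x" using hS r xX xS by simp
      obtain k2 where k2: "k1 = Suc k2" using k1 by (cases k1) auto
      have G: "ex k1 (h @ [RSearch r]) = map_pmf (add_cost (ecost x)) (ex k2 (h @ [RSearch r, REval (f x)]))"
        unfolding ex_def k2 using exec_Chk[OF hC] by simp
      have ecx: "fst (ecost x) \<le> E" "snd (ecost x) \<le> E" using ev unfolding eval_costs_def E_def
        by (meson max.coboundedI2)+
      show ?thesis
      proof (cases "f x")
        case False
        have hD: "foldl (upd X) (init X) (h @ [RSearch r, REval (f x)]) = Done S"
          using hC False by simp
        have G2: "ex k2 (h @ [RSearch r, REval (f x)]) = return_pmf (if k2 = 0 then None else Some S, 0, 0)"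
          unfolding ex_def by (rule exec_Done[OF hD])
        have nc: "\<not> search_correct X f S r" using False r unfolding search_correct_def
          by (auto split: if_splits)
        show ?thesis using nc G G2 ecx ER by auto
      next
        case True
        have hS2: "foldl (upd X) (init X) (h @ [RSearch r, REval (f x)]) = Srch (insert x S)"
          using hC True by simp
        have xT: "x \<in> T - S" using xX xS True by (simp add: T_def)
        have m1: "m \<ge> 1" using cm xT finT
          by (metis Diff_infinite_finite One_nat_def Suc_leI card_gt_0_iff empty_iff finite_Diff)
        have cm2: "card (T - insert x S) = m - 1"
          using cm xT finT by (metis Diff_insert card_Diff_singleton finite_Diff)
        have ST2: "insert x S \<subseteq> T" using ST xT by auto
        have "2 * (m - 1) + 2 \<le> k2" using km k k2 m1 by simp
        from IH[of "m - 1", OF _ hS2 ST2 cm2 this] m1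
        have ih: "measure_pmf.prob (ex k2 (h @ [RSearch r, REval (f x)])) {t. fst t \<noteq> Some T} \<le> real m * p"
          "\<forall>t\<in>set_pmf (ex k2 (h @ [RSearch r, REval (f x)])). fst (snd t) \<le> ff Q E (m - 1) \<and> snd (snd t) \<le> ff Q E (m - 1)"
          by (auto simp: of_nat_diff)
        have Rm: "R = E + ff Q E (m - 1)" using m1 by (simp add: R_def)
        show ?thesis
        proof
          show "measure_pmf.prob (ex k1 (h @ [RSearch r])) {t. fst t \<noteq> Some T}
                \<le> (if search_correct X f S r then real m * p else 1)"
            using G ih(1) by simp
          show "\<forall>t\<in>set_pmf (ex k1 (h @ [RSearch r])). fst (snd t) \<le> R \<and> snd (snd t) \<le> R"
          proof
            fix t assume "t \<in> set_pmf (ex k1 (h @ [RSearch r]))"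
            then obtain t' where t': "t' \<in> set_pmf (ex k2 (h @ [RSearch r, REval (f x)]))"
              and t: "t = add_cost (ecost x) t'" unfolding G by auto
            show "fst (snd t) \<le> R \<and> snd (snd t) \<le> R"
              using ih(2) t' unfolding t Rm using ecx by auto
          qed
        qed
      qed
    qed
  qed
  have orcS: "measure_pmf.prob (QS c0 S) {r. search_correct X f S r} \<ge> 1 - p"
    "fst (scost c0 S) \<le> Kq c0 * sqrt (real (card X) / max 1 (real m)) * ln (real n)"
    "snd (scost c0 S) \<le> Kq c0 * sqrt (real (card X) / max 1 (real m)) * ln (real n)"
    using orc[unfolded search_oracle_def, rule_format, of c0 S] unfolding p_def setTS cm by auto
  have qb: "measure_pmf.prob (QS c0 S) {r. \<not> search_correct X f S r} \<le> p"
  proof -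
    have "{r. \<not> search_correct X f S r} = UNIV - {r. search_correct X f S r}" by auto
    moreover have "measure_pmf.prob (QS c0 S) (space (measure_pmf (QS c0 S)) - {r. search_correct X f S r})
       = 1 - measure_pmf.prob (QS c0 S) {r. search_correct X f S r}"
      by (rule measure_pmf.prob_compl) simp
    ultimately show ?thesis using orcS(1) by simp
  qed
  have prob: "measure_pmf.prob (ex k h) {t. fst t \<noteq> Some T} \<le> real m * p + p"
    unfolding exk
    by (rule prob_bind_le[OF _ _ qb]) (use per p0 in auto)
  have scb: "Kq c0 * sqrt (real (card X) / max 1 (real m)) * ln (real n) \<le> Q / sqrt (max 1 (real m))"
  proof -
    have L0: "ln (real n) \<ge> 0" using n2 by simp
    have "Kq c0 * sqrt (real (card X) / max 1 (real m)) * ln (real n)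
        \<le> max 0 (Kq c0) * sqrt (real (card X) / max 1 (real m)) * ln (real n)"
      using L0 by (intro mult_right_mono) auto
    also have "\<dots> = Q / sqrt (max 1 (real m))" unfolding Q_def by (simp add: real_sqrt_divide)
    finally show ?thesis .
  qed
  have fin_step: "Q / sqrt (max 1 (real m)) + R \<le> ff Q E m"
    unfolding R_def using ff_step[OF Q0 E0] by simp
  have costs: "\<forall>t\<in>set_pmf (ex k h). fst (snd t) \<le> ff Q E m \<and> snd (snd t) \<le> ff Q E m"
  proof
    fix t assume "t \<in> set_pmf (ex k h)"
    then obtain r t' where t': "t' \<in> set_pmf (ex k1 (h @ [RSearch r]))" and t: "t = add_cost (scost c0 S) t'"
      unfolding exk by auto
    from per[of r] t' have "fst (snd t') \<le> R" "snd (snd t') \<le> R" by auto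
    thus "fst (snd t) \<le> ff Q E m \<and> snd (snd t) \<le> ff Q E m"
      using t orcS(2,3) scb fin_step by auto
  qed
  show ?case using prob costs unfolding T_def p_def Q_def E_def ex_def
    by (simp add: algebra_simps add_divide_distrib)
qed


theorem lemma4:
  fixes c :: real
  assumes "c > 0"
  shows "\<exists>(alg :: nat \<Rightarrow> nat set \<Rightarrow> resp list \<Rightarrow> action) (fuel :: nat \<Rightarrow> nat set \<Rightarrow> nat).
    \<forall>(Kq :: nat \<Rightarrow> real) (Ke :: real). \<exists>K :: real.
    \<forall>(n :: nat) (d :: nat) (X :: nat set) (f :: nat \<Rightarrow> bool) QS ecost scost.
      2 \<le> n \<and> d < n \<and> X \<subseteq> {1..d} \<and> search_oracle n X f QS Kq scost \<and> eval_costs Ke ecost \<longrightarrow>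
      (let D = exec (alg n X) f QS ecost scost (fuel n X) [];
           C = card {x\<in>X. f x};
           B = K * sqrt (real (card X) * max (real C) 1) * ln (real n)
       in measure_pmf.prob D {t. fst t = Some {x\<in>X. f x}} \<ge> 1 - 1 / real n powr c
          \<and> (\<forall>t\<in>set_pmf D. fst (snd t) \<le> B \<and> snd (snd t) \<le> B))"
proof -
  define j where "j = nat \<lceil>c\<rceil>"
  define c0 where "c0 = j + 1"
  have cj: "c \<le> real j"
  proof -
    have "\<lceil>c\<rceil> \<ge> 0" using assms by simp
    hence "real j = real_of_int \<lceil>c\<rceil>" unfolding j_def by simp
    thus ?thesis by simp
  qed
  show ?thesis
  proof (rule exI[of _ "\<lambda>n X. alg0 c0 X"], rule exI[of _ "\<lambda>n X. 2 * card X + 2"], intro allI)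
    fix Kq :: "nat \<Rightarrow> real" and Ke :: real
    define A where "A = max 0 (Kq c0)"
    define E where "E = max 0 Ke"
    define K where "K = 3 * A + 2 * E / ln 2"
    show "\<exists>K. \<forall>n d X f QS ecost scost.
      2 \<le> n \<and> d < n \<and> X \<subseteq> {1..d} \<and> search_oracle n X f QS Kq scost \<and> eval_costs Ke ecost \<longrightarrow>
      (let D = exec (alg0 c0 X) f QS ecost scost (2 * card X + 2) [];
           C = card {x\<in>X. f x};
           B = K * sqrt (real (card X) * max (real C) 1) * ln (real n)
       in measure_pmf.prob D {t. fst t = Some {x\<in>X. f x}} \<ge> 1 - 1 / real n powr c
          \<and> (\<forall>t\<in>set_pmf D. fst (snd t) \<le> B \<and> snd (snd t) \<le> B))"
    proof (rule exI[of _ K], intro allI impI)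
      fix n d X f QS ecost scost
      assume H: "2 \<le> n \<and> d < n \<and> X \<subseteq> {1..d} \<and> search_oracle n X f QS Kq scost \<and> eval_costs Ke ecost"
      hence n2: "2 \<le> n" and dn: "d < n" and Xd: "X \<subseteq> {1..d}" and orc: "search_oracle n X f QS Kq scost"
        and ev: "eval_costs Ke ecost" by auto
      have finX: "finite X" using Xd finite_subset by blast
      have cX: "card X \<le> d" using card_mono[OF _ Xd] by simp
      define T where "T = {x\<in>X. f x}"
      define D where "D = exec (alg0 c0 X) f QS ecost scost (2 * card X + 2) []"
      define C where "C = card T"
      define B where "B = K * sqrt (real (card X) * max (real C) 1) * ln (real n)"
      have CX: "C \<le> card X" unfolding C_def T_def using finX by (intro card_mono) auto
      have goal: "measure_pmf.prob D {t. fst t = Some T} \<ge> 1 - 1 / real n powr c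
          \<and> (\<forall>t\<in>set_pmf D. fst (snd t) \<le> B \<and> snd (snd t) \<le> B)"
      proof (cases "X = {}")
        case True
        have "D = return_pmf (Some {}, 0, 0)" unfolding D_def
          by (subst exec_Done[of X "[]" "{}"]) (simp_all add: init_def True)
        moreover have "T = {}" using True by (simp add: T_def)
        moreover have "1 / real n powr c \<ge> 0" by simp
        moreover have "B = 0" using True by (simp add: B_def)
        ultimately show ?thesis by simp
      next
        case False
        have hI: "foldl (upd X) (init X) [] = Srch {}" using False by (simp add: init_def)
        have "card X \<ge> 1" using False finX by (simp add: Suc_le_eq card_gt_0_iff)
        note M = main[OF orc ev n2 finX hI, of C "2 * card X + 2" c0]
        have M1: "measure_pmf.prob D {t. fst t \<noteq> Some T} \<le> (real C + 1) / real n ^ c0"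
          and M2: "\<forall>t\<in>set_pmf D. fst (snd t) \<le> ff (A * sqrt (real (card X)) * ln (real n)) E C
             \<and> snd (snd t) \<le> ff (A * sqrt (real (card X)) * ln (real n)) E C"
          using M CX unfolding D_def C_def T_def A_def E_def by auto
        have np: "real n > 0" using n2 by simp
        have pw: "(real C + 1) / real n ^ c0 \<le> 1 / real n powr c"
        proof -
          have "real C + 1 \<le> real n" using CX cX dn by simp
          hence "(real C + 1) / real n ^ c0 \<le> real n / real n ^ c0"
            by (intro divide_right_mono) auto
          also have "\<dots> = 1 / real n ^ j" unfolding c0_def using np by simp
          also have "\<dots> \<le> 1 / real n powr c"
          proof -
            have "real n powr c \<le> real n powr real j"
              using n2 cj by (intro powr_mono) auto
            also have "\<dots> = real n ^ j" using np by (simp add: powr_realpow)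
            finally show ?thesis using np by (intro divide_left_mono) auto
          qed
          finally show ?thesis .
        qed
        have pr: "measure_pmf.prob D {t. fst t = Some T} = 1 - measure_pmf.prob D {t. fst t \<noteq> Some T}"
        proof -
          have "{t. fst t = Some T} = space (measure_pmf D) - {t. fst t \<noteq> Some T}" by auto
          moreover have "measure_pmf.prob D (space (measure_pmf D) - {t. fst t \<noteq> Some T})
             = 1 - measure_pmf.prob D {t. fst t \<noteq> Some T}"
            by (rule measure_pmf.prob_compl) simp
          ultimately show ?thesis by simp
        qed
        have cost: "ff (A * sqrt (real (card X)) * ln (real n)) E C \<le> B"
        proof -
          define L where "L = ln (real n)"
          define N where "N = real (card X)"
          define Mx where "Mx = max (real C) 1"
          have L2: "L \<ge> ln 2" unfolding L_def using n2 by simp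
          have ln2: "ln 2 > (0::real)" by simp
          have L0: "L \<ge> 0" using L2 ln2 by linarith
          have A0: "A \<ge> 0" and E0: "E \<ge> 0" by (simp_all add: A_def E_def)
          have N1: "N \<ge> 1" using \<open>card X \<ge> 1\<close> by (simp add: N_def)
          have MN: "Mx \<le> N" using CX N1 by (simp add: Mx_def N_def)
          have Mx1: "Mx \<ge> 1" by (simp add: Mx_def)
          have sq: "sqrt (N * Mx) = sqrt N * sqrt Mx" by (simp add: real_sqrt_mult)
          have t1: "1 + 2 * sqrt (real C) \<le> 3 * sqrt Mx"
          proof -
            have "sqrt (real C) \<le> sqrt Mx" by (simp add: Mx_def)
            moreover have "1 \<le> sqrt Mx" using Mx1 by simp
            ultimately show ?thesis by linarith
          qed
          have a1: "A * sqrt N * L * (1 + 2 * sqrt (real C)) \<le> 3 * A * sqrt (N * Mx) * L"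
          proof -
            have "A * sqrt N * L * (1 + 2 * sqrt (real C)) \<le> A * sqrt N * L * (3 * sqrt Mx)"
              using t1 A0 L0 N1 by (intro mult_left_mono mult_nonneg_nonneg) auto
            also have "\<dots> = 3 * A * sqrt (N * Mx) * L" unfolding sq by (simp add: algebra_simps)
            finally show ?thesis .
          qed
          have MxS: "Mx \<le> sqrt (N * Mx)"
          proof (rule real_le_rsqrt)
            show "Mx\<^sup>2 \<le> N * Mx" using MN Mx1 by (simp add: power2_eq_square mult_right_mono)
          qed
          have a2: "E * (real C + 1) \<le> 2 * E / ln 2 * sqrt (N * Mx) * L"
          proof -
            have "real C + 1 \<le> 2 * Mx" by (simp add: Mx_def)
            also have "\<dots> \<le> 2 * sqrt (N * Mx)" using MxS by simp
            also have "\<dots> = 2 * sqrt (N * Mx) * 1" by simp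
            also have "\<dots> \<le> 2 * sqrt (N * Mx) * (L / ln 2)"
              using L2 ln2 N1 Mx1 by (intro mult_left_mono) (auto simp: le_divide_eq)
            finally have "E * (real C + 1) \<le> E * (2 * sqrt (N * Mx) * (L / ln 2))"
              using E0 by (intro mult_left_mono) auto
            thus ?thesis by (simp add: mult.assoc mult.left_commute)
          qed
          show ?thesis unfolding ff_def B_def K_def using a1 a2
            unfolding L_def N_def Mx_def by (simp add: algebra_simps)
        qed
        show ?thesis using M1 M2 pw pr cost by auto
      qed
      thus "let D = exec (alg0 c0 X) f QS ecost scost (2 * card X + 2) [];
           C = card {x\<in>X. f x};
           B = K * sqrt (real (card X) * max (real C) 1) * ln (real n)
       in measure_pmf.prob D {t. fst t = Some {x\<in>X. f x}} \<ge> 1 - 1 / real n powr c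
          \<and> (\<forall>t\<in>set_pmf D. fst (snd t) \<le> B \<and> snd (snd t) \<le> B)"
        unfolding D_def B_def C_def T_def Let_def .
    qed
  qed
qed

end
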